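(* Let $L$ be a frame. Then $$\mathsf R(L)=\mathrm{Int}(\mathsf{Cl}(L))=\mathcal B(\mathsf{Ex}(L))=\mathcal B(\mathsf{SE}(L))=\mathcal B(\mathsf{Filt}(L))$$ and $$\{\mathrm{fit}(S)\mid S\in\mathcal S_c(L)\}=\mathcal B(\{\mathrm{fit}(S)\mid S\in\mathcal S_b(L)\})=\mathcal B(\mathcal S_o(L)).$$
   Context: A frame is a complete lattice $L$ with $(\bigvee A)\wedge b=\bigvee_{a\in A}(a\wedge b)$, Heyting implication $\to$. For a coframe $C$ with top $1$ and co-Heyting difference $\setminus$ ($a\setminus b\le c$ iff $a\le b\vee c$), its Booleanization is $\mathcal B(C)=\{1\setminus c\mid c\in C\}$. Filters are nonempty up-closed subsets closed under finite meets; $\mathsf{Filt}(L)$ is ordered by reverse inclusion and is a coframe with joins = intersections, top $\{1\}$, and $H\setminus G=\{a\mid\forall b\in G,\ b\vee a\in H\}$. $\mathsf{Cl}(L)=\{\{x\mid x\vee a=1\}\mid a\in L\}$; $\mathsf R(L)=\{\{1\}\setminus G\mid G\in\mathsf{Filt}(L)\}$; $\mathrm{Int}(\mathcal F)$ = intersections of subfamilies (empty $=L$). $\mathfrak o(a)=\{a\to b\mid b\in L\}$. $\mathsf{Ex}(L)$: filters closed under exact meets ($(\bigwedge M)\vee b=\bigwedge_{a\in M}(a\vee b)$ for all $b$); $\mathsf{SE}(L)$: filters closed under strongly exact meets ($\bigcap_{a\in M}\mathfrak o(a)=\mathfrak o(\bigwedge M)$); both are coframes under reverse inclusion (subcolocales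 of $\mathsf{Filt}(L)$). Sublocales: subsets closed under all meets with $a\to s\in S$; they form the coframe $\mathsf{Sl}(L)$ under inclusion. $\mathrm{fit}(S)=\bigcap\{\mathfrak o(a)\mid S\subseteq\mathfrak o(a)\}$; $\mathcal S_o(L)$ is the coframe (under inclusion) of fitted sublocales (intersections of open sublocales), with joins $\mathrm{fit}$ of $\mathsf{Sl}(L)$-joins. $\mathcal S_c(L)$: joins of closed sublocales $\mathfrak c(a)={\uparrow}a$; $\mathcal S_b(L)$: joins of sublocales $\mathfrak c(x)\cap\mathfrak o(y)$. $\{\mathrm{fit}(S)\mid S\in\mathcal S_b(L)\}$ is a coframe under inclusion (a subcolocale of $\mathcal S_o(L)$). *)

theory Defs
  imports Main
begin

definition is_lub :: "'b set \<Rightarrow> ('b \<Rightarrow> 'b \<Rightarrow> bool) \<Rightarrow> 'b set \<Rightarrow> 'b \<Rightarrow> bool" where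
  "is_lub C le X x \<longleftrightarrow> x \<in> C \<and> (\<forall>y\<in>X. le y x) \<and> (\<forall>z\<in>C. (\<forall>y\<in>X. le y z) \<longrightarrow> le x z)"

definition cjoin :: "'b set \<Rightarrow> ('b \<Rightarrow> 'b \<Rightarrow> bool) \<Rightarrow> 'b \<Rightarrow> 'b \<Rightarrow> 'b" where
  "cjoin C le a b = (THE x. is_lub C le {a, b} x)"

definition ctop :: "'b set \<Rightarrow> ('b \<Rightarrow> 'b \<Rightarrow> bool) \<Rightarrow> 'b" where
  "ctop C le = (THE x. x \<in> C \<and> (\<forall>y\<in>C. le y x))"

definition codiff :: "'b set \<Rightarrow> ('b \<Rightarrow> 'b \<Rightarrow> bool) \<Rightarrow> 'b \<Rightarrow> 'b \<Rightarrow> 'b" where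
  "codiff C le a b = (THE c. c \<in> C \<and> (\<forall>d\<in>C. le a (cjoin C le b d) \<longleftrightarrow> le c d))"

definition booleanization :: "'b set \<Rightarrow> ('b \<Rightarrow> 'b \<Rightarrow> bool) \<Rightarrow> 'b set" where
  "booleanization C le = {codiff C le (ctop C le) c | c. c \<in> C}"

definition fimp :: "'a::complete_lattice \<Rightarrow> 'a \<Rightarrow> 'a" where
  "fimp a b = Sup {c. inf c a \<le> b}"

definition is_filter :: "'a::complete_lattice set \<Rightarrow> bool" where
  "is_filter F \<longleftrightarrow> F \<noteq> {} \<and> (\<forall>a\<in>F. \<forall>b. a \<le> b \<longrightarrow> b \<in> F) \<and> (\<forall>a\<in>F. \<forall>b\<in>F. inf a b \<in> F)"

definition Filt :: "'a::complete_lattice set set" where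
  "Filt = {F. is_filter F}"

definition rev_incl :: "'b set \<Rightarrow> 'b set \<Rightarrow> bool" where
  "rev_incl F G \<longleftrightarrow> G \<subseteq> F"

text \<open>The explicit difference formula of Filt(L): H \ G.\<close>
definition filt_diff :: "'a::complete_lattice set \<Rightarrow> 'a set \<Rightarrow> 'a set" where
  "filt_diff H G = {a. \<forall>b\<in>G. sup b a \<in> H}"

definition Cl :: "'a::complete_lattice set set" where
  "Cl = {{x. sup x a = top} | a. True}"

definition R :: "'a::complete_lattice set set" where
  "R = {filt_diff {top} G | G. G \<in> Filt}"

definition Int_fam :: "'b set set \<Rightarrow> 'b set set" where
  "Int_fam \<F> = {\<Inter> \<G> | \<G>. \<G> \<subseteq> \<F>}"

definition opn :: "'a::complete_lattice \<Rightarrow> 'a set" where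
  "opn a = {fimp a b | b. True}"

definition cls :: "'a::complete_lattice \<Rightarrow> 'a set" where
  "cls a = {x. a \<le> x}"

definition exact_meet :: "'a::complete_lattice set \<Rightarrow> bool" where
  "exact_meet M \<longleftrightarrow> (\<forall>b. sup (Inf M) b = (INF a\<in>M. sup a b))"

definition strongly_exact_meet :: "'a::complete_lattice set \<Rightarrow> bool" where
  "strongly_exact_meet M \<longleftrightarrow> (\<Inter>a\<in>M. opn a) = opn (Inf M)"

definition Ex :: "'a::complete_lattice set set" where
  "Ex = {F. is_filter F \<and> (\<forall>M. M \<subseteq> F \<and> exact_meet M \<longrightarrow> Inf M \<in> F)}"

definition SE :: "'a::complete_lattice set set" where
  "SE = {F. is_filter F \<and> (\<forall>M. M \<subseteq> F \<and> strongly_exact_meet M \<longrightarrow> Inf M \<in> F)}"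

definition is_sublocale :: "'a::complete_lattice set \<Rightarrow> bool" where
  "is_sublocale S \<longleftrightarrow> (\<forall>X. X \<subseteq> S \<longrightarrow> Inf X \<in> S) \<and> (\<forall>a. \<forall>s\<in>S. fimp a s \<in> S)"

definition sl_join :: "'a::complete_lattice set set \<Rightarrow> 'a set" where
  "sl_join \<S> = \<Inter> {T. is_sublocale T \<and> \<Union> \<S> \<subseteq> T}"

definition fit :: "'a::complete_lattice set \<Rightarrow> 'a set" where
  "fit S = \<Inter> {opn a | a. S \<subseteq> opn a}"

definition S_o :: "'a::complete_lattice set set" where
  "S_o = {\<Inter> (opn ` A) | A. True}"

definition S_c :: "'a::complete_lattice set set" where
  "S_c = {sl_join (cls ` A) | A. True}"

definition S_b :: "'a::complete_lattice set set" where
  "S_b = {sl_join \<X> | \<X>. \<X> \<subseteq> {cls x \<inter> opn y | x y. True}}"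

end

theory Submission imports Defs begin

definition Nf :: "'a::complete_lattice set \<Rightarrow> 'a set" where
  "Nf H = {a. \<forall>b\<in>H. sup b a = top}"
definition Oo :: "'a::complete_lattice set \<Rightarrow> 'a set" where
  "Oo A = \<Inter>(opn ` A)"
definition Op :: "'a::complete_lattice set \<Rightarrow> 'a set" where
  "Op S = {a. S \<subseteq> opn a}"

lemma Nf_sub2: "H \<subseteq> Nf (Nf H)"
  unfolding Nf_def by (auto simp: sup_commute)
lemma Nf_anti: "H \<subseteq> H' \<Longrightarrow> Nf H' \<subseteq> Nf H"
  unfolding Nf_def by auto
lemma Nf_triple: "Nf (Nf (Nf H)) = Nf H"
  by (meson Nf_anti Nf_sub2 subset_antisym)

locale frm =
  assumes frame: "\<And>(A :: 'a::complete_lattice set) b. inf (Sup A) b = (SUP a\<in>A. inf a b)"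
begin

lemma inf_sup_distR: "inf (sup x y) z = sup (inf x z) (inf y z)" for x y z :: 'a
  using frame[of "{x,y}" z] by simp

lemma sup_inf_dist: "sup b (inf a c) = inf (sup b a) (sup b c)" for a b c :: 'a
proof -
  have "inf (sup b a) (sup b c) = sup (inf b (sup b c)) (inf a (sup b c))"
    by (rule inf_sup_distR)
  also have "inf b (sup b c) = b" by simp
  also have "inf a (sup b c) = sup (inf b a) (inf c a)"
    using inf_sup_distR[of b c a] by (simp add: inf_commute)
  also have "sup b (sup (inf b a) (inf c a)) = sup b (inf a c)"
    by (metis inf_commute sup.absorb_iff1 inf_le1 sup_assoc)
  finally show ?thesis by simp
qed

lemma fimp_iff: "c \<le> fimp a b \<longleftrightarrow> inf c a \<le> b" for a b c :: 'a
proof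
  assume "c \<le> fimp a b"
  hence "inf c a \<le> inf (Sup {c. inf c a \<le> b}) a" unfolding fimp_def by (rule inf_mono) simp
  also have "\<dots> = (SUP s\<in>{c. inf c a \<le> b}. inf s a)" by (rule frame)
  also have "\<dots> \<le> b" by (rule SUP_least) simp
  finally show "inf c a \<le> b" .
next
  assume "inf c a \<le> b" thus "c \<le> fimp a b" unfolding fimp_def by (simp add: Sup_upper)
qed

lemma eq_by_le: "(\<And>c. c \<le> x \<longleftrightarrow> c \<le> y) \<Longrightarrow> x = y" for x y :: 'a
  by (meson order.antisym order_refl)

lemma fimp_fimp: "fimp a (fimp a' b) = fimp (inf a a') b" for a a' b :: 'a
  by (rule eq_by_le) (simp add: fimp_iff inf_assoc)

lemma fimp_ge: "b \<le> fimp a b" for a b :: 'a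
  by (simp add: fimp_iff le_infI1)

lemma fimp_mono2: "b \<le> b' \<Longrightarrow> fimp a b \<le> fimp a b'" for a b b' :: 'a
  by (meson fimp_iff order_refl order_trans)

lemma fimp_top: "fimp a b = top \<longleftrightarrow> a \<le> b" for a b :: 'a
proof
  assume "fimp a b = top"
  hence "top \<le> fimp a b" by simp
  thus "a \<le> b" unfolding fimp_iff by simp
next
  assume "a \<le> b"
  hence "top \<le> fimp a b" unfolding fimp_iff by simp
  thus "fimp a b = top" by (rule top_le)
qed

lemma opn_iff: "s \<in> opn a \<longleftrightarrow> fimp a s = s" for a s :: 'a
proof
  assume "s \<in> opn a"
  then obtain b where "s = fimp a b" by (auto simp: opn_def)
  thus "fimp a s = s" by (simp add: fimp_fimp)
next
  assume "fimp a s = s"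
  thus "s \<in> opn a" unfolding opn_def by (metis (mono_tags, lifting) mem_Collect_eq)
qed

lemma opn_mono: "a \<le> a' \<Longrightarrow> opn a \<subseteq> opn a'" for a a' :: 'a
  by (auto simp: opn_iff) (metis fimp_fimp inf_absorb2)

lemma opn_top: "opn (top::'a) = UNIV"
  by (auto simp: opn_iff) (metis eq_by_le fimp_iff inf_top_right)

lemma opn_UNIV: "opn a = UNIV \<Longrightarrow> a = (top::'a)"
  by (metis UNIV_I fimp_top opn_iff order_refl)

lemma sublocale_opn: "is_sublocale (opn (a::'a))"
  unfolding is_sublocale_def
proof (intro conjI allI impI ballI)
  fix X assume X: "X \<subseteq> opn a"
  have "fimp a (Inf X) \<le> Inf X"
  proof (rule Inf_greatest)
    fix s assume "s \<in> X"
    hence "fimp a s = s" using X opn_iff by blast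
    moreover have "fimp a (Inf X) \<le> fimp a s" using \<open>s\<in>X\<close> by (simp add: Inf_lower fimp_mono2)
    ultimately show "fimp a (Inf X) \<le> s" by simp
  qed
  hence "fimp a (Inf X) = Inf X" using fimp_ge by (metis order.antisym)
  thus "Inf X \<in> opn a" by (simp add: opn_iff)
next
  fix b s assume "s \<in> opn a"
  thus "fimp b s \<in> opn a" by (simp add: opn_iff fimp_fimp inf_commute)
      (metis fimp_fimp inf_commute)
qed

lemma cls_opn: "cls x \<subseteq> opn a \<longleftrightarrow> sup a x = (top::'a)"
proof
  assume "cls x \<subseteq> opn a"
  hence "sup a x \<in> opn a" by (auto simp: cls_def)
  thus "sup a x = top" by (metis fimp_top opn_iff sup_ge1)
next
  assume h: "sup a x = top"
  show "cls x \<subseteq> opn a"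
  proof
    fix y assume "y \<in> cls x" hence xy: "x \<le> y" by (simp add: cls_def)
    have "fimp a y \<le> y"
    proof -
      let ?c = "fimp a y"
      have "?c = inf ?c (sup a x)" using h by simp
      also have "\<dots> = sup (inf ?c a) (inf ?c x)"
        by (metis inf_commute inf_sup_distR)
      also have "\<dots> \<le> y"
      proof (rule sup_least)
        show "inf ?c a \<le> y" using fimp_iff[of ?c a y] by simp
        show "inf ?c x \<le> y" using xy by (simp add: le_infI2)
      qed
      finally show ?thesis .
    qed
    thus "y \<in> opn a" using fimp_ge by (metis opn_iff order.antisym)
  qed
qed

lemma sl_join_sub: "sl_join X \<subseteq> opn (a::'a) \<longleftrightarrow> (\<forall>Y\<in>X. Y \<subseteq> opn a)"
  unfolding sl_join_def using sublocale_opn by blast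

lemma Nf_filter: "is_filter (Nf (H::'a set))"
  unfolding is_filter_def
proof (intro conjI ballI allI impI)
  have "top \<in> Nf H" by (simp add: Nf_def)
  thus "Nf H \<noteq> {}" by blast
next
  fix a b assume a: "a \<in> Nf H" and ab: "a \<le> b"
  show "b \<in> Nf H" unfolding Nf_def
  proof (intro CollectI ballI)
    fix c assume "c \<in> H"
    hence "sup c a = top" using a by (simp add: Nf_def)
    moreover have "sup c a \<le> sup c b" using ab by (rule sup_mono[OF order_refl])
    ultimately show "sup c b = top" by (metis top_unique)
  qed
next
  fix a b assume "a \<in> Nf H" "b \<in> Nf H"
  thus "inf a b \<in> Nf H" by (simp add: Nf_def sup_inf_dist)
qed

lemma filt_top: "is_filter F \<Longrightarrow> (top::'a) \<in> F"
  unfolding is_filter_def by auto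

lemma filt_up: "is_filter F \<Longrightarrow> a \<in> F \<Longrightarrow> a \<le> b \<Longrightarrow> (b::'a) \<in> F"
  unfolding is_filter_def by auto

lemma Nf_Ex: "Nf (H::'a set) \<in> Ex"
  unfolding Ex_def
proof (intro CollectI conjI allI impI Nf_filter)
  fix M assume M: "M \<subseteq> Nf H \<and> exact_meet M"
  show "Inf M \<in> Nf H" unfolding Nf_def
  proof (intro CollectI ballI)
    fix b assume "b \<in> H"
    have "sup b (Inf M) = (INF a\<in>M. sup a b)" using M by (simp add: exact_meet_def sup_commute)
    also have "\<dots> = top" using M \<open>b\<in>H\<close> by (auto simp: Nf_def sup_commute intro!: INF_eq_const)
    finally show "sup b (Inf M) = top" .
  qed
qed

lemma Nf_SE: "Nf (H::'a set) \<in> SE"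
  unfolding SE_def
proof (intro CollectI conjI allI impI Nf_filter)
  fix M assume M: "M \<subseteq> Nf H \<and> strongly_exact_meet M"
  show "Inf M \<in> Nf H" unfolding Nf_def
  proof (intro CollectI ballI)
    fix b assume "b \<in> H"
    have "\<forall>a\<in>M. cls b \<subseteq> opn a" using M \<open>b\<in>H\<close> by (auto simp: Nf_def cls_opn sup_commute)
    hence "cls b \<subseteq> \<Inter>(opn ` M)" by blast
    hence "cls b \<subseteq> opn (Inf M)" using M by (simp add: strongly_exact_meet_def)
    thus "sup b (Inf M) = top" by (simp add: cls_opn sup_commute)
  qed
qed

lemma filt_char:
  assumes G: "is_filter G" and d: "is_filter d"
  shows "G \<inter> d \<subseteq> {top} \<longleftrightarrow> d \<subseteq> Nf (G::'a set)"
proof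
  assume h: "G \<inter> d \<subseteq> {top}"
  show "d \<subseteq> Nf G" unfolding Nf_def
  proof (intro subsetI CollectI ballI)
    fix a b assume a: "a \<in> d" and b: "b \<in> G"
    have "sup b a \<in> G" by (rule filt_up[OF G b sup_ge1])
    moreover have "sup b a \<in> d" by (rule filt_up[OF d a sup_ge2])
    ultimately show "sup b a = top" using h by blast
  qed
next
  assume h: "d \<subseteq> Nf G"
  show "G \<inter> d \<subseteq> {top}"
  proof
    fix x assume x: "x \<in> G \<inter> d"
    hence "x \<in> Nf G" using h by blast
    hence "sup x x = top" using x unfolding Nf_def by blast
    thus "x \<in> {top}" by simp
  qed
qed

lemma boolean_filt:
  assumes C: "C \<subseteq> Filt" "{top} \<in> C" "\<forall>a\<in>C. \<forall>b\<in>C. a \<inter> b \<in> C" "\<forall>H. Nf H \<in> C"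
  shows "booleanization C rev_incl = range (Nf :: 'a set \<Rightarrow> 'a set)"
proof -
  have fC: "\<And>F. F \<in> C \<Longrightarrow> is_filter F" using C(1) by (auto simp: Filt_def)
  have ct: "ctop C rev_incl = {top}"
    unfolding ctop_def rev_incl_def
  proof (rule the_equality)
    show "{top} \<in> C \<and> (\<forall>y\<in>C. {top} \<subseteq> y)" using C(2) fC filt_top by blast
  next
    fix x assume "x \<in> C \<and> (\<forall>y\<in>C. x \<subseteq> y)"
    thus "x = {top}" using C(2) fC filt_top by blast
  qed
  have cj: "cjoin C rev_incl a b = a \<inter> b" if "a \<in> C" "b \<in> C" for a b
    unfolding cjoin_def
  proof (rule the_equality)
    show "is_lub C rev_incl {a, b} (a \<inter> b)" using that C(3) by (auto simp: is_lub_def rev_incl_def)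
  next
    fix x assume "is_lub C rev_incl {a, b} x"
    thus "x = a \<inter> b" using that C(3) by (auto simp: is_lub_def rev_incl_def)
  qed
  have key: "rev_incl {top} (cjoin C rev_incl G d) = rev_incl (Nf G) d" if G: "G \<in> C" and d: "d \<in> C" for G d
  proof -
    have "rev_incl {top} (cjoin C rev_incl G d) = (G \<inter> d \<subseteq> {top})"
      using cj[OF G d] by (simp add: rev_incl_def)
    also have "\<dots> = (d \<subseteq> Nf G)" by (rule filt_char[OF fC[OF G] fC[OF d]])
    finally show ?thesis by (simp add: rev_incl_def)
  qed
  have cd: "codiff C rev_incl (ctop C rev_incl) G = Nf G" if G: "G \<in> C" for G
    unfolding codiff_def ct
  proof (rule the_equality)
    show "Nf G \<in> C \<and> (\<forall>d\<in>C. rev_incl {top} (cjoin C rev_incl G d) = rev_incl (Nf G) d)"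
      using C(4) key[OF G] by blast
  next
    fix c assume h: "c \<in> C \<and> (\<forall>d\<in>C. rev_incl {top} (cjoin C rev_incl G d) = rev_incl c d)"
    hence e: "\<forall>d\<in>C. rev_incl (Nf G) d = rev_incl c d" using key[OF G] by simp
    have "rev_incl c c" by (simp add: rev_incl_def)
    hence 1: "c \<subseteq> Nf G" using e h by (simp add: rev_incl_def)
    have "Nf G \<in> C" using C(4) by blast
    hence "rev_incl (Nf G) (Nf G) = rev_incl c (Nf G)" using e by blast
    hence 2: "Nf G \<subseteq> c" by (simp add: rev_incl_def)
    show "c = Nf G" using 1 2 by blast
  qed
  have "booleanization C rev_incl = Nf ` C"
    unfolding booleanization_def using cd by auto
  also have "\<dots> = range Nf"
  proof
    show "range Nf \<subseteq> Nf ` C"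
    proof
      fix x :: "'a set" assume "x \<in> range Nf" then obtain H where "x = Nf H" by blast
      hence "x = Nf (Nf (Nf H))" by (simp add: Nf_triple)
      thus "x \<in> Nf ` C" using C(4) by blast
    qed
  qed auto
  finally show ?thesis .
qed

lemma fit_eq: "fit S = Oo (Op S)"
  unfolding fit_def Oo_def Op_def by auto

lemma sub_fit: "S \<subseteq> fit S"
  unfolding fit_def by auto

lemma Op_up: "a \<in> Op S \<Longrightarrow> a \<le> a' \<Longrightarrow> (a'::'a) \<in> Op S"
  unfolding Op_def using opn_mono by blast

lemma Oo_anti: "A \<subseteq> B \<Longrightarrow> Oo B \<subseteq> Oo A"
  unfolding Oo_def by auto

lemma Op_Oo: "A \<subseteq> Op (Oo A)"
  unfolding Op_def Oo_def by auto

lemma Op_fit: "Op (fit S) = Op S"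
  unfolding Op_def fit_def by auto

lemma Op_Un: "Op (X \<union> Y) = Op X \<inter> Op Y"
  unfolding Op_def by auto

lemma fit_Oo: "fit (Oo A) = Oo A"
  by (metis Oo_anti Op_Oo fit_eq sub_fit subset_antisym)

lemma fit_fit: "fit (fit S) = fit S"
  by (metis fit_Oo fit_eq)

lemma Op_Oo_Nf: "Op (Oo (Nf G)) = Nf (G::'a set)"
proof (rule equalityI)
  show "Op (Oo (Nf G)) \<subseteq> Nf G"
  proof (intro subsetI)
    fix a assume a: "a \<in> Op (Oo (Nf G))"
    show "a \<in> Nf G" unfolding Nf_def
    proof (intro CollectI ballI)
    fix g assume g: "g \<in> G"
    have "\<forall>f\<in>Nf G. cls g \<subseteq> opn f" using g by (auto simp: Nf_def cls_opn sup_commute)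
    hence "cls g \<subseteq> Oo (Nf G)" unfolding Oo_def by blast
    also have "\<dots> \<subseteq> opn a" using a by (simp add: Op_def)
    finally show "sup g a = top" by (simp add: cls_opn sup_commute)
  qed
  qed
qed (rule Op_Oo)

lemma fit_mono: "S \<subseteq> T \<Longrightarrow> fit S \<subseteq> fit T"
  unfolding fit_def by blast

lemma fit_UNIV: "UNIV \<subseteq> fit Z \<longleftrightarrow> Op Z \<subseteq> {top::'a}"
proof
  assume "UNIV \<subseteq> fit Z"
  hence "\<forall>a\<in>Op Z. opn a = UNIV" by (auto simp: fit_eq Oo_def)
  thus "Op Z \<subseteq> {top}" using opn_UNIV by blast
next
  assume "Op Z \<subseteq> {top}"
  thus "UNIV \<subseteq> fit Z" by (auto simp: fit_eq Oo_def opn_top)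
qed

lemma Op_char: "Op d \<subseteq> Nf (Op X) \<longleftrightarrow> Op X \<inter> Op d \<subseteq> {top::'a}"
proof
  assume h: "Op d \<subseteq> Nf (Op X)"
  show "Op X \<inter> Op d \<subseteq> {top}"
  proof
    fix x assume x: "x \<in> Op X \<inter> Op d"
    hence "x \<in> Nf (Op X)" using h by blast
    hence "sup x x = top" using x unfolding Nf_def by blast
    thus "x \<in> {top}" by simp
  qed
next
  assume h: "Op X \<inter> Op d \<subseteq> {top}"
  show "Op d \<subseteq> Nf (Op X)" unfolding Nf_def
  proof (intro subsetI CollectI ballI)
    fix a b assume "a \<in> Op d" "b \<in> Op X"
    hence "sup b a \<in> Op d" "sup b a \<in> Op X" by (auto intro: Op_up)
    thus "sup b a = top" using h by blast
  qed
qed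

lemma boolean_fit:
  assumes C: "\<forall>X\<in>C. fit X = X" "UNIV \<in> C" "\<forall>X\<in>C. \<forall>Y\<in>C. fit (X \<union> Y) \<in> C"
     "\<forall>G. Oo (Nf G) \<in> C"
  shows "booleanization C (\<subseteq>) = range (\<lambda>G::'a set. Oo (Nf G))"
proof -
  have ct: "ctop C (\<subseteq>) = UNIV"
    unfolding ctop_def
  proof (rule the_equality)
    show "UNIV \<in> C \<and> (\<forall>y\<in>C. y \<subseteq> UNIV)" using C(2) by blast
  next
    fix x assume "x \<in> C \<and> (\<forall>y\<in>C. y \<subseteq> x)"
    thus "x = UNIV" using C(2) by blast
  qed
  have cj: "cjoin C (\<subseteq>) a b = fit (a \<union> b)" if "a \<in> C" "b \<in> C" for a b
    unfolding cjoin_def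
  proof (rule the_equality)
    have "\<forall>z\<in>C. a \<subseteq> z \<and> b \<subseteq> z \<longrightarrow> fit (a \<union> b) \<subseteq> z"
      using C(1) fit_mono[of "a \<union> b"] by blast
    moreover have "a \<union> b \<subseteq> fit (a \<union> b)" by (rule sub_fit)
    ultimately show "is_lub C (\<subseteq>) {a, b} (fit (a \<union> b))" using that C(3)
      by (auto simp: is_lub_def)
  next
    fix x assume h: "is_lub C (\<subseteq>) {a, b} x"
    have "\<forall>z\<in>C. a \<subseteq> z \<and> b \<subseteq> z \<longrightarrow> fit (a \<union> b) \<subseteq> z"
      using C(1) fit_mono[of "a \<union> b"] by blast
    moreover have "a \<union> b \<subseteq> fit (a \<union> b)" by (rule sub_fit)
    moreover have "fit (a \<union> b) \<in> C" using that C(3) by auto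
    ultimately have fc: "\<forall>z\<in>C. a \<subseteq> z \<and> b \<subseteq> z \<longrightarrow> fit (a \<union> b) \<subseteq> z" "a \<subseteq> fit (a \<union> b)"
        "b \<subseteq> fit (a \<union> b)" "fit (a \<union> b) \<in> C" by auto
    have hx: "x \<in> C" "a \<subseteq> x" "b \<subseteq> x" "\<forall>z\<in>C. a \<subseteq> z \<and> b \<subseteq> z \<longrightarrow> x \<subseteq> z"
      using h unfolding is_lub_def by auto
    have "x \<subseteq> fit (a \<union> b)" using hx(4) fc(2-4) by blast
    moreover have "fit (a \<union> b) \<subseteq> x" using fc(1) hx(1-3) by blast
    ultimately show "x = fit (a \<union> b)" by (rule subset_antisym)
  qed
  have key: "(UNIV \<subseteq> cjoin C (\<subseteq>) X d) = (Oo (Nf (Op X)) \<subseteq> d)" if X: "X \<in> C" and d: "d \<in> C" for X d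
  proof -
    have "(UNIV \<subseteq> cjoin C (\<subseteq>) X d) = (Op X \<inter> Op d \<subseteq> {top})"
      using cj[OF X d] by (simp only: fit_UNIV Op_Un)
    also have "\<dots> = (Op d \<subseteq> Nf (Op X))" using Op_char by simp
    also have "\<dots> = (Oo (Nf (Op X)) \<subseteq> d)"
    proof
      assume "Op d \<subseteq> Nf (Op X)"
      hence "Oo (Nf (Op X)) \<subseteq> Oo (Op d)" by (rule Oo_anti)
      also have "Oo (Op d) = d" using C(1) d fit_eq by metis
      finally show "Oo (Nf (Op X)) \<subseteq> d" .
    next
      assume "Oo (Nf (Op X)) \<subseteq> d"
      thus "Op d \<subseteq> Nf (Op X)" using Op_Oo_Nf[of "Op X"] by (auto simp: Op_def)
    qed
    finally show ?thesis .
  qed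
  have cd: "codiff C (\<subseteq>) (ctop C (\<subseteq>)) X = Oo (Nf (Op X))" if X: "X \<in> C" for X
    unfolding codiff_def ct
  proof (rule the_equality)
    show "Oo (Nf (Op X)) \<in> C \<and> (\<forall>d\<in>C. (UNIV \<subseteq> cjoin C (\<subseteq>) X d) = (Oo (Nf (Op X)) \<subseteq> d))"
      using C(4) key X by blast
  next
    fix c assume h: "c \<in> C \<and> (\<forall>d\<in>C. (UNIV \<subseteq> cjoin C (\<subseteq>) X d) = (c \<subseteq> d))"
    hence "\<forall>d\<in>C. (Oo (Nf (Op X)) \<subseteq> d) = (c \<subseteq> d)" using key X by blast
    thus "c = Oo (Nf (Op X))" using h C(4) by blast
  qed
  have "booleanization C (\<subseteq>) = (\<lambda>X. Oo (Nf (Op X))) ` C"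
    unfolding booleanization_def using cd by auto
  also have "\<dots> = range (\<lambda>G. Oo (Nf G))"
  proof
    show "range (\<lambda>G. Oo (Nf G)) \<subseteq> (\<lambda>X. Oo (Nf (Op X))) ` C"
    proof
      fix x :: "'a set" assume "x \<in> range (\<lambda>G. Oo (Nf G))" then obtain H where "x = Oo (Nf H)" by blast
      hence "x = Oo (Nf (Op (Oo (Nf (Nf H)))))" by (simp add: Nf_triple Op_Oo_Nf)
      thus "x \<in> (\<lambda>X. Oo (Nf (Op X))) ` C" using C(4) by blast
    qed
  qed auto
  finally show ?thesis .
qed

lemma Op_sl: "Op (sl_join X) = {a::'a. \<forall>Y\<in>X. Y \<subseteq> opn a}"
  unfolding Op_def using sl_join_sub by blast

lemma fit_scl: "fit (sl_join (cls ` A)) = Oo (Nf (A::'a set))"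
proof -
  have "Op (sl_join (cls ` A)) = Nf A"
    unfolding Op_sl Nf_def by (auto simp: cls_opn sup_commute)
  thus ?thesis by (simp add: fit_eq)
qed

lemma filt_single: "is_filter {top::'a}"
  unfolding is_filter_def by (simp add: top_unique)

lemma filt_inf: "is_filter F \<Longrightarrow> a \<in> F \<Longrightarrow> b \<in> F \<Longrightarrow> inf a (b::'a) \<in> F"
  unfolding is_filter_def by blast

lemma filt_int: assumes "is_filter F" "is_filter G" shows "is_filter (F \<inter> (G::'a set))"
  unfolding is_filter_def
proof (intro conjI ballI allI impI)
  show "F \<inter> G \<noteq> {}" using filt_top assms by blast
  fix a b assume "a \<in> F \<inter> G" "a \<le> b" thus "b \<in> F \<inter> G" using filt_up assms by blast
next
  fix a b assume "a \<in> F \<inter> G" "b \<in> F \<inter> G" thus "inf a b \<in> F \<inter> G"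
    using filt_inf assms by blast
qed

lemma range_Nf_Filt: "Nf ` Filt = range (Nf :: 'a set \<Rightarrow> 'a set)"
proof (rule equalityI)
  show "range Nf \<subseteq> Nf ` (Filt :: 'a set set)"
  proof
    fix x :: "'a set" assume "x \<in> range Nf" then obtain H where "x = Nf H" by blast
    hence "x = Nf (Nf (Nf H))" by (simp add: Nf_triple)
    moreover have "Nf (Nf H) \<in> Filt" using Nf_filter by (simp add: Filt_def)
    ultimately show "x \<in> Nf ` Filt" by blast
  qed
qed auto

lemma R_eq: "(R :: 'a set set) = range Nf"
proof -
  have "R = Nf ` (Filt :: 'a set set)"
    unfolding R_def filt_diff_def Nf_def by auto
  thus ?thesis using range_Nf_Filt by simp
qed

lemma Int_Cl_eq: "Int_fam (Cl :: 'a set set) = range Nf"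
proof (rule equalityI)
  show "Int_fam Cl \<subseteq> range (Nf :: 'a set \<Rightarrow> 'a set)"
  proof
    fix x :: "'a set" assume "x \<in> Int_fam Cl"
    then obtain G where G: "G \<subseteq> Cl" "x = \<Inter>G" by (auto simp: Int_fam_def)
    have "\<Inter>G = Nf {a. {y. sup y a = top} \<in> G}"
    proof (rule set_eqI)
      fix y
      show "y \<in> \<Inter>G \<longleftrightarrow> y \<in> Nf {a. {y. sup y a = top} \<in> G}"
      proof
        assume "y \<in> \<Inter>G" thus "y \<in> Nf {a. {y. sup y a = top} \<in> G}"
          unfolding Nf_def by (auto simp: sup_commute)
      next
        assume h: "y \<in> Nf {a. {y. sup y a = top} \<in> G}"
        show "y \<in> \<Inter>G"
        proof
          fix g assume "g \<in> G"
          then obtain a where a: "g = {y. sup y a = top}" using G(1) by (auto simp: Cl_def)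
          hence "a \<in> {a. {y. sup y a = top} \<in> G}" using \<open>g \<in> G\<close> by simp
          hence "sup a y = top" using h unfolding Nf_def by blast
          thus "y \<in> g" using a by (simp add: sup_commute)
        qed
      qed
    qed
    thus "x \<in> range Nf" using G by blast
  qed
next
  show "range Nf \<subseteq> Int_fam (Cl :: 'a set set)"
  proof
    fix x :: "'a set" assume "x \<in> range Nf" then obtain A where A: "x = Nf A" by blast
    have "Nf A = \<Inter>((\<lambda>a. {y. sup y a = top}) ` A)"
      unfolding Nf_def by (auto simp: sup_commute)
    moreover have "(\<lambda>a. {y. sup y a = top}) ` A \<subseteq> Cl" by (auto simp: Cl_def)
    ultimately show "x \<in> Int_fam Cl" unfolding Int_fam_def using A by blast
  qed
qed

lemma top_Inf: "M \<subseteq> {top} \<Longrightarrow> Inf M = (top::'a)"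
  by (auto simp: Inf_top_conv)

lemma Ex_eq: "booleanization (Ex :: 'a set set) rev_incl = range Nf"
proof (rule boolean_filt)
  show "Ex \<subseteq> (Filt :: 'a set set)" by (auto simp: Ex_def Filt_def)
  show "{top::'a} \<in> Ex" by (auto simp: Ex_def filt_single top_Inf)
  show "\<forall>a\<in>Ex. \<forall>b\<in>Ex. a \<inter> (b::'a set) \<in> Ex" by (auto simp: Ex_def filt_int)
  show "\<forall>H::'a set. Nf H \<in> Ex" using Nf_Ex by blast
qed

lemma SE_eq: "booleanization (SE :: 'a set set) rev_incl = range Nf"
proof (rule boolean_filt)
  show "SE \<subseteq> (Filt :: 'a set set)" by (auto simp: SE_def Filt_def)
  show "{top::'a} \<in> SE" by (auto simp: SE_def filt_single top_Inf)
  show "\<forall>a\<in>SE. \<forall>b\<in>SE. a \<inter> (b::'a set) \<in> SE" by (auto simp: SE_def filt_int)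
  show "\<forall>H::'a set. Nf H \<in> SE" using Nf_SE by blast
qed

lemma Filt_eq: "booleanization (Filt :: 'a set set) rev_incl = range Nf"
proof (rule boolean_filt)
  show "{top::'a} \<in> Filt" by (auto simp: Filt_def filt_single)
  show "\<forall>a\<in>Filt. \<forall>b\<in>Filt. a \<inter> (b::'a set) \<in> Filt" by (auto simp: Filt_def filt_int)
  show "\<forall>H::'a set. Nf H \<in> Filt" using Nf_filter by (simp add: Filt_def)
qed simp

lemma Sc_eq: "fit ` (S_c :: 'a set set) = range (\<lambda>G::'a set. Oo (Nf G))"
  unfolding S_c_def using fit_scl by auto

lemma Sb_eq: "booleanization (fit ` (S_b :: 'a set set)) (\<subseteq>) = range (\<lambda>G::'a set. Oo (Nf G))"
proof (rule boolean_fit)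
  show "\<forall>X\<in>fit ` (S_b::'a set set). fit X = X" using fit_fit by auto
  have "cls bot = (UNIV::'a set)" by (auto simp: cls_def)
  hence "cls bot \<inter> opn top = (UNIV::'a set)" by (simp add: opn_top)
  hence "{UNIV::'a set} \<subseteq> {cls x \<inter> opn y | x y. True}" by blast
  hence "sl_join {UNIV::'a set} \<in> S_b" unfolding S_b_def by blast
  moreover have "UNIV \<subseteq> sl_join {UNIV::'a set}" unfolding sl_join_def by auto
  hence "fit (sl_join {UNIV::'a set}) = UNIV" using sub_fit by blast
  ultimately show "(UNIV::'a set) \<in> fit ` S_b" by (metis imageI)
  show "\<forall>X\<in>fit ` (S_b::'a set set). \<forall>Y\<in>fit ` (S_b::'a set set). fit (X \<union> Y) \<in> fit ` (S_b::'a set set)"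
  proof (intro ballI)
    fix X Y :: "'a set" assume "X \<in> fit ` S_b" "Y \<in> fit ` S_b"
    then obtain XX YY where XY: "X = fit (sl_join XX)" "Y = fit (sl_join YY)"
      "XX \<subseteq> {cls x \<inter> opn y | x y. True}" "YY \<subseteq> {cls x \<inter> opn y | x y. True}"
      by (auto simp: S_b_def)
    have "fit (X \<union> Y) = Oo (Op (sl_join XX) \<inter> Op (sl_join YY))"
      using XY by (simp add: fit_eq Op_Un Op_fit[unfolded fit_eq])
    also have "Op (sl_join XX) \<inter> Op (sl_join YY) = Op (sl_join (XX \<union> YY))"
      unfolding Op_sl by auto
    also have "Oo \<dots> = fit (sl_join (XX \<union> YY))" by (simp add: fit_eq)
    finally have "fit (X \<union> Y) = fit (sl_join (XX \<union> YY))" .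
    moreover have "XX \<union> YY \<subseteq> {cls x \<inter> opn y | x y. True}" using XY(3,4) by blast
    hence "sl_join (XX \<union> YY) \<in> S_b" unfolding S_b_def by blast
    ultimately show "fit (X \<union> Y) \<in> fit ` S_b" by blast
  qed
  show "\<forall>G. Oo (Nf G) \<in> fit ` (S_b::'a set set)"
  proof
    fix G :: "'a set"
    have "cls ` G \<subseteq> {cls x \<inter> opn y | x y. True}" using opn_top by blast
    hence "sl_join (cls ` G) \<in> S_b" unfolding S_b_def by blast
    thus "Oo (Nf G) \<in> fit ` S_b" using fit_scl by (metis image_eqI)
  qed
qed

lemma So_eq: "booleanization (S_o :: 'a set set) (\<subseteq>) = range (\<lambda>G::'a set. Oo (Nf G))"
proof -
  have So: "(S_o :: 'a set set) = range Oo" unfolding S_o_def Oo_def by auto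
  show ?thesis unfolding So
  proof (rule boolean_fit)
    show "\<forall>X\<in>range (Oo::'a set \<Rightarrow> 'a set). fit X = X" using fit_Oo by auto
    have "Oo {} = (UNIV::'a set)" by (simp add: Oo_def)
    thus "UNIV \<in> range (Oo::'a set \<Rightarrow> 'a set)" by (metis rangeI)
    show "\<forall>X\<in>range (Oo::'a set \<Rightarrow> 'a set). \<forall>Y\<in>range (Oo::'a set \<Rightarrow> 'a set). fit (X \<union> Y) \<in> range (Oo::'a set \<Rightarrow> 'a set)"
      by (simp add: fit_eq)
    show "\<forall>G. Oo (Nf G) \<in> range (Oo::'a set \<Rightarrow> 'a set)" by simp
  qed
qed

end

theorem mainTheorem17:
  assumes frame: "\<And>(A :: 'a::complete_lattice set) b. inf (Sup A) b = (SUP a\<in>A. inf a b)"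
  shows "(R :: 'a set set) = Int_fam Cl
       \<and> Int_fam (Cl :: 'a set set) = booleanization Ex rev_incl
       \<and> booleanization (Ex :: 'a set set) rev_incl = booleanization SE rev_incl
       \<and> booleanization (SE :: 'a set set) rev_incl = booleanization Filt rev_incl
       \<and> fit ` (S_c :: 'a set set) = booleanization (fit ` S_b) (\<subseteq>)
       \<and> booleanization (fit ` (S_b :: 'a set set)) (\<subseteq>) = booleanization S_o (\<subseteq>)"
proof -
  have F: "frm TYPE('a)" by (rule frm.intro) (rule frame)
  show ?thesis
    using frm.R_eq[OF F] frm.Int_Cl_eq[OF F] frm.Ex_eq[OF F] frm.SE_eq[OF F] frm.Filt_eq[OF F]
      frm.Sc_eq[OF F] frm.Sb_eq[OF F] frm.So_eq[OF F] by simp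
qed

end
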